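(* Let $\sigma$ be a non-negative integer and $f\in H^2_\sigma(\mathbb{D})$. Then for every $a\in\mathbb{D}$ there is a constant $C(\sigma,a)$, depending only on $\sigma$ and $a$, such that for all integers $n\ge 1$ $$\left|\left\langle f,\frac{k_{n,a}}{\|k_{n,a}\|}\right\rangle\right|\le C(\sigma,a)\,\frac{1}{n^{\sigma}}\,\|f\|_{H^2_\sigma}.$$
   Context: $\mathbb{D}$ is the open unit disc; $H^2(\mathbb{D})$ the Hardy space with inner product $\langle f,g\rangle=\frac{1}{2\pi}\int_0^{2\pi}f(e^{it})\overline{g(e^{it})}\,dt$ (for $f=\sum c_kz^k$, $\|f\|^2=\sum|c_k|^2$). For $n\in\mathbb{N}$, $a\in\mathbb{D}$: $k_{n,a}(z)=\left(\frac{\partial}{\partial\overline{a}}\right)^n\frac{1}{1-\overline{a}z}=\frac{n!\,z^n}{(1-\overline{a}z)^{n+1}}$. For $\sigma\ge 0$ the Hardy–Sobolev space is $H^2_\sigma(\mathbb{D})=\{f(z)=\sum_{k\ge0}c_kz^k:\ \sum_{k\ge0}|(1+k^\sigma)c_k|^2<\infty\}$ with $\|f\|_{H^2_\sigma}=\left(\sum_{k\ge0}|(1+k^\sigma)c_k|^2\right)^{1/2}$. *)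

theory Defs
  imports "HOL-Complex_Analysis.Complex_Analysis"
begin

definition taylor_coeff :: "(complex \<Rightarrow> complex) \<Rightarrow> nat \<Rightarrow> complex" where
  "taylor_coeff f k = (deriv ^^ k) f 0 / of_nat (fact k)"

definition H2_inner :: "(complex \<Rightarrow> complex) \<Rightarrow> (complex \<Rightarrow> complex) \<Rightarrow> complex" where
  "H2_inner f g = (\<Sum>k. taylor_coeff f k * cnj (taylor_coeff g k))"

definition H2_norm :: "(complex \<Rightarrow> complex) \<Rightarrow> real" where
  "H2_norm f = sqrt (\<Sum>k. (cmod (taylor_coeff f k))\<^sup>2)"

definition HS_space :: "real \<Rightarrow> (complex \<Rightarrow> complex) set" where
  "HS_space \<sigma> = {f. f holomorphic_on ball 0 1 \<and>
      summable (\<lambda>k. ((1 + real k powr \<sigma>) * cmod (taylor_coeff f k))\<^sup>2)}"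

definition HS_norm :: "real \<Rightarrow> (complex \<Rightarrow> complex) \<Rightarrow> real" where
  "HS_norm \<sigma> f = sqrt (\<Sum>k. ((1 + real k powr \<sigma>) * cmod (taylor_coeff f k))\<^sup>2)"

definition kna :: "nat \<Rightarrow> complex \<Rightarrow> complex \<Rightarrow> complex" where
  "kna n a z = of_nat (fact n) * z ^ n / (1 - cnj a * z) ^ (n + 1)"

end

theory Submission imports Defs begin

lemma pt: fixes H W U :: real assumes Hp: "H > 0"
  shows "W * U \<le> (W\<^sup>2 / H + H * U\<^sup>2) / 2"
proof -
  have "0 \<le> (W - H * U)\<^sup>2" by simp
  also have "\<dots> = W\<^sup>2 - 2 * H * (W * U) + H * H * U\<^sup>2" by (simp add: power2_eq_square algebra_simps)
  finally have "2 * H * (W * U) \<le> W\<^sup>2 + H * H * U\<^sup>2" by linarith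
  then have "(2 * H * (W * U)) / (2 * H) \<le> (W\<^sup>2 + H * H * U\<^sup>2) / (2 * H)"
    using Hp by (intro divide_right_mono) auto
  also have "(2 * H * (W * U)) / (2 * H) = W * U" using Hp by simp
  also have "(W\<^sup>2 + H * H * U\<^sup>2) / (2 * H) = (W\<^sup>2 / H + H * U\<^sup>2) / 2" using Hp
    by (simp add: add_divide_distrib power2_eq_square)
  finally show ?thesis .
qed
lemma l3: fixes S H U :: real assumes Hp: "H > 0" "H * H = S" "U \<le> 1"
  shows "(S / H + H * U) / 2 \<le> (H + H) / 2"
proof -
  have "S / H = H" using assms by (simp flip: assms(2))
  moreover have "H * U \<le> H" using mult_left_mono[OF assms(3), of H] Hp by simp
  ultimately show ?thesis by (intro divide_right_mono) auto
qed

lemma absCS: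
  fixes c u :: "nat \<Rightarrow> complex" and n \<sigma> :: nat
  defines "w \<equiv> (\<lambda>k. (1 + real k powr real \<sigma>) * cmod (c k))"
  assumes sw: "summable (\<lambda>k. (w k)\<^sup>2)"
    and su: "summable (\<lambda>k. (cmod (u k))\<^sup>2)" and su1: "(\<Sum>k. (cmod (u k))\<^sup>2) \<le> 1"
    and u0: "\<And>k. k < n \<Longrightarrow> u k = 0" and n: "n \<ge> 1"
  shows "cmod (\<Sum>k. c k * cnj (u k)) \<le> (1 / real n ^ \<sigma>) * sqrt (\<Sum>k. (w k)\<^sup>2)"
proof -
  define H where "H = sqrt (\<Sum>k. (w k)\<^sup>2)"
  have S0: "(\<Sum>k. (w k)\<^sup>2) \<ge> 0" by (intro suminf_nonneg sw) auto
  have wge: "cmod (c k) \<le> w k" for k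
  proof -
    have "1 \<le> 1 + real k powr real \<sigma>" by simp
    from mult_right_mono[OF this norm_ge_zero[of "c k"]] show ?thesis unfolding w_def by simp
  qed
  have wnn: "w k \<ge> 0" for k using wge[of k] norm_ge_zero order_trans by blast
  have sq_le: "x * y \<le> x\<^sup>2 + y\<^sup>2" for x y :: real
  proof -
    have "2 * (x * y) \<le> x\<^sup>2 + y\<^sup>2" using sum_squares_bound[of x y] by (simp add: mult.assoc)
    moreover have "0 \<le> x\<^sup>2 + y\<^sup>2" by simp
    ultimately show ?thesis by linarith
  qed
  have sq2: "(cmod (c k))\<^sup>2 \<le> (w k)\<^sup>2" for k using wge[of k] by (simp add: power_mono)
  have b1: "norm (cmod (c k) * cmod (u k)) \<le> (w k)\<^sup>2 + (cmod (u k))\<^sup>2" for k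
  proof -
    have "norm (cmod (c k) * cmod (u k)) = cmod (c k) * cmod (u k)" by simp
    also have "\<dots> \<le> (cmod (c k))\<^sup>2 + (cmod (u k))\<^sup>2" by (rule sq_le)
    also have "\<dots> \<le> (w k)\<^sup>2 + (cmod (u k))\<^sup>2" using sq2[of k] by linarith
    finally show ?thesis .
  qed
  have b2: "norm (w k * cmod (u k)) \<le> (w k)\<^sup>2 + (cmod (u k))\<^sup>2" for k
  proof -
    have "norm (w k * cmod (u k)) = w k * cmod (u k)" using wnn[of k] by simp
    also have "\<dots> \<le> (w k)\<^sup>2 + (cmod (u k))\<^sup>2" by (rule sq_le)
    finally show ?thesis .
  qed
  have sp: "summable (\<lambda>k. cmod (c k) * cmod (u k))"
    by (rule summable_comparison_test[OF _ summable_add[OF sw su]]) (use b1 in blast)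
  have sq: "summable (\<lambda>k. w k * cmod (u k))"
    by (rule summable_comparison_test[OF _ summable_add[OF sw su]]) (use b2 in blast)
  have pq: "cmod (c k) * cmod (u k) \<le> (1 / real n ^ \<sigma>) * (w k * cmod (u k))" for k
  proof (cases "k < n")
    case True then show ?thesis using u0 wnn by simp
  next
    case False
    then have kn: "real n \<le> real k" "real k > 0" using n by auto
    have "real n ^ \<sigma> \<le> real k ^ \<sigma>" using kn by (simp add: power_mono)
    also have "\<dots> = real k powr real \<sigma>" using kn by (simp add: powr_realpow)
    finally have "real n ^ \<sigma> \<le> real k powr real \<sigma>" .
    then have "real n ^ \<sigma> \<le> 1 + real k powr real \<sigma>" by linarith
    from mult_right_mono[OF this norm_ge_zero[of "c k"]]
    have "real n ^ \<sigma> * cmod (c k) \<le> w k" unfolding w_def by simp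
    then have "cmod (c k) \<le> w k / real n ^ \<sigma>" using n by (simp add: field_simps)
    then have "cmod (c k) * cmod (u k) \<le> (w k / real n ^ \<sigma>) * cmod (u k)"
      by (rule mult_right_mono) simp
    then show ?thesis by simp
  qed
  have qH: "(\<Sum>k. w k * cmod (u k)) \<le> H"
  proof (cases "H = 0")
    case True
    then have "(\<Sum>k. (w k)\<^sup>2) = 0" unfolding H_def using S0 by simp
    then have "\<forall>k. (w k)\<^sup>2 = 0" using suminf_eq_zero_iff[OF sw] by simp
    then show ?thesis using True by simp
  next
    case False
    then have Hp: "H > 0" unfolding H_def using S0 by simp
    have HH: "H * H = (\<Sum>k. (w k)\<^sup>2)" unfolding H_def using S0 by simp
    have ptk: "w k * cmod (u k) \<le> ((w k)\<^sup>2 / H + H * (cmod (u k))\<^sup>2) / 2" for k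
      by (rule pt[OF Hp])
    have s2: "summable (\<lambda>k. ((w k)\<^sup>2 / H + H * (cmod (u k))\<^sup>2) / 2)"
      by (intro summable_divide summable_add summable_mult su) (use sw in auto)
    have "(\<Sum>k. w k * cmod (u k)) \<le> (\<Sum>k. ((w k)\<^sup>2 / H + H * (cmod (u k))\<^sup>2) / 2)"
      by (rule suminf_le[OF ptk sq s2])
    also have "\<dots> = ((\<Sum>k. (w k)\<^sup>2) / H + H * (\<Sum>k. (cmod (u k))\<^sup>2)) / 2"
    proof -
      have e1: "(\<lambda>k. (w k)\<^sup>2 / H) sums ((\<Sum>k. (w k)\<^sup>2) / H)"
        by (rule sums_divide) (rule summable_sums[OF sw])
      have e2: "(\<lambda>k. H * (cmod (u k))\<^sup>2) sums (H * (\<Sum>k. (cmod (u k))\<^sup>2))"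
        by (rule sums_mult) (rule summable_sums[OF su])
      have "(\<lambda>k. ((w k)\<^sup>2 / H + H * (cmod (u k))\<^sup>2) / 2) sums
             (((\<Sum>k. (w k)\<^sup>2) / H + H * (\<Sum>k. (cmod (u k))\<^sup>2)) / 2)"
        by (rule sums_divide) (rule sums_add[OF e1 e2])
      then show ?thesis by (rule sums_unique[symmetric])
    qed
    also have "\<dots> \<le> (H + H) / 2" by (rule l3[OF Hp HH su1])
    finally show ?thesis by simp
  qed
  have "cmod (\<Sum>k. c k * cnj (u k)) \<le> (\<Sum>k. cmod (c k * cnj (u k)))"
    by (rule summable_norm) (use sp in \<open>simp add: norm_mult\<close>)
  also have "\<dots> = (\<Sum>k. cmod (c k) * cmod (u k))" by (simp add: norm_mult)
  also have "\<dots> \<le> (\<Sum>k. (1 / real n ^ \<sigma>) * (w k * cmod (u k)))"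
    by (rule suminf_le[OF pq sp summable_mult[OF sq]])
  also have "\<dots> = (1 / real n ^ \<sigma>) * (\<Sum>k. w k * cmod (u k))"
    by (rule suminf_mult[OF sq])
  also have "\<dots> \<le> (1 / real n ^ \<sigma>) * H" using qH by (intro mult_left_mono) auto
  finally show ?thesis unfolding H_def .
qed

lemma R_gt: "cmod a < 1 \<Longrightarrow> 1 < 2 / (1 + cmod a)"
proof -
  assume h: "cmod a < 1"
  have p: "0 < 1 + cmod a" by (simp add: add_pos_nonneg)
  show ?thesis using h p by (simp add: field_simps)
qed

lemma aR_lt: "cmod a < 1 \<Longrightarrow> cmod a * (2 / (1 + cmod a)) < 1"
proof -
  assume h: "cmod a < 1"
  have p: "0 < 1 + cmod a" by (simp add: add_pos_nonneg)
  show ?thesis using h p by (simp add: field_simps)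
qed

lemma kna_hol:
  assumes "cmod a < 1"
  shows "kna n a holomorphic_on ball 0 (2 / (1 + cmod a))"
proof -
  have "1 - cnj a * z \<noteq> 0" if "z \<in> ball 0 (2 / (1 + cmod a))" for z
  proof -
    have z: "cmod z < 2 / (1 + cmod a)" using that by simp
    have "cmod (cnj a * z) = cmod a * cmod z" by (simp add: norm_mult)
    also have "\<dots> \<le> cmod a * (2 / (1 + cmod a))" using z by (intro mult_left_mono) auto
    also have "\<dots> < 1" using aR_lt[OF assms] .
    finally show ?thesis by auto
  qed
  then show ?thesis unfolding kna_def by (auto intro!: holomorphic_intros)
qed

lemma kna_coeff0:
  assumes "cmod a < 1" "k < n"
  shows "taylor_coeff (kna n a) k = 0"
proof -
  define R where "R = 2 / (1 + cmod a)"
  have R: "R > 1" using R_gt[OF assms(1)] by (simp add: R_def)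
  have hol: "kna n a holomorphic_on ball 0 R" using kna_hol[OF assms(1)] R_def by simp
  have nz: "1 - cnj a * z \<noteq> 0" if "z \<in> ball 0 R" for z
  proof -
    have z: "cmod z < R" using that by simp
    have "cmod (cnj a * z) = cmod a * cmod z" by (simp add: norm_mult)
    also have "\<dots> \<le> cmod a * R" using z by (intro mult_left_mono) auto
    also have "\<dots> < 1" using aR_lt[OF assms(1)] by (simp add: R_def)
    finally show ?thesis by auto
  qed
  have eq: "kna n a = (\<lambda>w. w ^ n * (of_nat (fact n) / (1 - cnj a * w) ^ (n + 1)))"
    by (simp add: kna_def fun_eq_iff)
  have h1: "(\<lambda>w. w ^ n) holomorphic_on ball 0 R" by (auto intro!: holomorphic_intros)
  have h2: "(\<lambda>w. of_nat (fact n) / (1 - cnj a * w) ^ (n + 1)) holomorphic_on ball 0 R"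
    using nz by (auto intro!: holomorphic_intros)
  have d0: "(deriv ^^ i) (\<lambda>w. w ^ n) 0 = 0" if "i < n" for i
    using higher_deriv_power[of i 0 n 0] that by (simp add: power_0_left)
  have "(deriv ^^ k) (kna n a) 0 = 0"
    unfolding eq using assms(2) R
    by (subst higher_deriv_mult[OF h1 h2]) (auto simp: d0)
  then show ?thesis by (simp add: taylor_coeff_def)
qed

lemma bdlem: fixes t K r :: real assumes r: "1 < r" and h: "t * r ^ k \<le> K" and t: "0 \<le> t"
  shows "t\<^sup>2 \<le> K\<^sup>2 * (1 / r\<^sup>2) ^ k"
proof -
  have rp: "0 < r ^ k" using r by simp
  have "t \<le> K / r ^ k" using h rp by (simp add: pos_le_divide_eq)
  then have "t\<^sup>2 \<le> (K / r ^ k)\<^sup>2" using t by (intro power_mono) auto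
  also have "(K / r ^ k)\<^sup>2 = K\<^sup>2 * (1 / r\<^sup>2) ^ k"
    by (simp add: power_divide power_one_over flip: power_mult) (simp add: mult.commute)
  finally show ?thesis .
qed
lemma geo: fixes r K :: real assumes r: "1 < r" shows "summable (\<lambda>k. K\<^sup>2 * (1 / r\<^sup>2) ^ k)"
proof -
  have "r\<^sup>2 > 1" using r by (metis one_less_power pos2)
  then have "norm (1 / r\<^sup>2) < 1" by (simp add: divide_less_eq)
  then show ?thesis by (intro summable_mult summable_geometric)
qed

lemma kna_summable:
  assumes "cmod a < 1"
  shows "summable (\<lambda>k. (cmod (taylor_coeff (kna n a) k))\<^sup>2)"
proof -
  define R where "R = 2 / (1 + cmod a)"
  have R: "R > 1" using R_gt[OF assms(1)] by (simp add: R_def)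
  have hol: "kna n a holomorphic_on ball 0 R" using kna_hol[OF assms(1)] R_def by simp
  define r where "r = (1 + R) / 2"
  have r: "1 < r" "r < R" using R by (auto simp: r_def)
  let ?t = "taylor_coeff (kna n a)"
  have "(\<lambda>k. (deriv ^^ k) (kna n a) 0 / fact k * (complex_of_real r - 0) ^ k) sums kna n a (complex_of_real r)"
    by (rule holomorphic_power_series[OF hol]) (use r in auto)
  then have "(\<lambda>k. ?t k * complex_of_real r ^ k) sums kna n a (complex_of_real r)"
    by (simp add: taylor_coeff_def)
  then have "convergent (\<lambda>k. ?t k * complex_of_real r ^ k)"
    by (rule convergentI[OF summable_LIMSEQ_zero[OF sums_summable]])
  then have "Bseq (\<lambda>k. ?t k * complex_of_real r ^ k)" by (rule convergent_imp_Bseq)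
  then obtain K where K: "K > 0" "\<And>k. norm (?t k * complex_of_real r ^ k) \<le> K"
    by (rule BseqE) auto
  have bd: "(cmod (?t k))\<^sup>2 \<le> K\<^sup>2 * (1 / r\<^sup>2) ^ k" for k
  proof -
    have "cmod (?t k) * r ^ k \<le> K" using K(2)[of k] r by (simp add: norm_mult norm_power)
    then show ?thesis by (rule bdlem[OF r(1)]) simp
  qed
  have "summable (\<lambda>k. K\<^sup>2 * (1 / r\<^sup>2) ^ k)" by (rule geo[OF r(1)])
  then show ?thesis by (rule summable_comparison_test[rotated]) (use bd in simp)
qed

theorem theorem7:
  fixes \<sigma> :: nat and a :: complex
  assumes "a \<in> ball 0 1"
  shows "\<exists>C. \<forall>f \<in> HS_space (real \<sigma>). \<forall>n::nat. n \<ge> 1 \<longrightarrow>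
           cmod (H2_inner f (\<lambda>z. kna n a z / complex_of_real (H2_norm (kna n a))))
             \<le> C * (1 / real n ^ \<sigma>) * HS_norm (real \<sigma>) f"
proof (intro exI[of _ 1] ballI allI impI)
  fix f n assume f: "f \<in> HS_space (real \<sigma>)" and n: "(n::nat) \<ge> 1"
  have a: "cmod a < 1" using assms by simp
  define N where "N = H2_norm (kna n a)"
  define R where "R = 2 / (1 + cmod a)"
  have R: "R > 1" using R_gt[OF a] by (simp add: R_def)
  have hol: "kna n a holomorphic_on ball 0 R" using kna_hol[OF a] R_def by simp
  let ?t = "taylor_coeff (kna n a)"
  define u where "u = taylor_coeff (\<lambda>z. kna n a z / complex_of_real N)"
  have ueq: "u k = ?t k / complex_of_real N" for k
  proof -
    have e: "(\<lambda>z. kna n a z / complex_of_real N) = (\<lambda>z. inverse (complex_of_real N) * kna n a z)"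
      by (simp add: fun_eq_iff divide_inverse mult.commute)
    show ?thesis unfolding u_def taylor_coeff_def e
      by (subst higher_deriv_cmult[OF hol]) (use R in \<open>auto simp: divide_inverse\<close>)
  qed
  have st: "summable (\<lambda>k. (cmod (?t k))\<^sup>2)" by (rule kna_summable[OF a])
  have S0: "(\<Sum>k. (cmod (?t k))\<^sup>2) \<ge> 0" by (intro suminf_nonneg st) auto
  have NN: "N\<^sup>2 = (\<Sum>k. (cmod (?t k))\<^sup>2)" unfolding N_def H2_norm_def using S0 by simp
  have uu: "(\<lambda>k. (cmod (u k))\<^sup>2) = (\<lambda>k. (cmod (?t k))\<^sup>2 / N\<^sup>2)"
    by (simp add: fun_eq_iff ueq norm_divide power_divide)
  have su: "summable (\<lambda>k. (cmod (u k))\<^sup>2)" unfolding uu by (intro summable_divide st)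
  have su1: "(\<Sum>k. (cmod (u k))\<^sup>2) \<le> 1" unfolding uu
    using suminf_divide[OF st, of "N\<^sup>2"] NN by (cases "N = 0") auto
  have u0: "u k = 0" if "k < n" for k using kna_coeff0[OF a that] ueq by simp
  have sw: "summable (\<lambda>k. ((1 + real k powr real \<sigma>) * cmod (taylor_coeff f k))\<^sup>2)"
    using f by (simp add: HS_space_def)
  show "cmod (H2_inner f (\<lambda>z. kna n a z / complex_of_real (H2_norm (kna n a))))
             \<le> 1 * (1 / real n ^ \<sigma>) * HS_norm (real \<sigma>) f"
  proof -
    have main: "cmod (\<Sum>k. taylor_coeff f k * cnj (u k)) \<le> 1 / real n ^ \<sigma> *
        sqrt (\<Sum>k. ((1 + real k powr real \<sigma>) * cmod (taylor_coeff f k))\<^sup>2)"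
      by (rule absCS[OF sw su su1 u0 n])
    have e: "H2_inner f (\<lambda>z. kna n a z / complex_of_real (H2_norm (kna n a))) =
        (\<Sum>k. taylor_coeff f k * cnj (u k))"
      by (simp only: H2_inner_def u_def N_def)
    show ?thesis by (simp only: e HS_norm_def mult_1) (rule main)
  qed
qed

end
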